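(* Let $M$ be an infinite strongly sofic monoid and let $\Sigma = (D_i,\sigma_i)_{i\in I}$ be a strong sofic approximation of $M$. Let $A$ be a finite set and let $X \subset A^M$ be a subshift. Then $h_\Sigma(X,M) \le \log|A|$. Moreover, $h_\Sigma(X,M) = \log|A|$ if and only if $X = A^M$.
   Context: $A^M$ is the set of maps $M\to A$ with the prodiscrete topology and the shift action $(mx)(m') = x(m'm)$; a subshift is a closed $M$-invariant subset. Hamming metric on $\operatorname{Map}(D)$ (all maps $D\to D$, $D$ finite non-empty): $d_D^{\mathrm{Ham}}(f,g) = \frac{1}{|D|}|\{v : f(v)\neq g(v)\}|$. A strong sofic approximation of $M$ is a net $(D_i,\sigma_i)_{i\in I}$ over a directed set, $D_i$ non-empty finite, $\sigma_i\colon M\to\operatorname{Map}(D_i)$, with $\sigma_i(1_M)=\mathrm{Id}_{D_i}$; $\lim_i d^{\mathrm{Ham}}_{D_i}(\sigma_i(m_1m_2),\sigma_i(m_1)\sigma_i(m_2))=0$ for all $m_1,m_2$; $\lim_i d^{\mathrm{Ham}}_{D_i}(\sigma_i(m_1),\sigma_i(m_2))=1$ for distinct $m_1,m_2$; and for every finite $K\subset M$ an integer $\Delta_K\ge1$ with $|\sigma_i(k)^{-1}(v)|\le\Delta_K$ for all $i$, $k\in K$, $v\in D_i$. A monoid is strongly sofic iff it admits one. A pseudometric $\rho$ on an $M$-space $X$ is dynamically generating if for distinct $x,y$ some $m$ has $\rho(mx,my)>0$. Sofic entropy: for $X$ compact with continuous $M$-action and continuous pseudometric $\rho$, for finite non-empty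 $D$ set $\rho_2^D(\varphi,\psi) = (\frac{1}{|D|}\sum_{v}\rho(\varphi(v),\psi(v))^2)^{1/2}$, $\rho_\infty^D(\varphi,\psi)=\max_v\rho(\varphi(v),\psi(v))$ on $X^D$, with $(m\varphi)(v)=m\varphi(v)$; for finite $F\subset M$, $\delta>0$, $\sigma\colon M\to\operatorname{Map}(D)$, $\operatorname{Map}(X,M,\rho,F,\delta,\sigma)=\{\varphi\in X^D:\rho_2^D(\varphi\circ\sigma(m),m\varphi)\le\delta\ \forall m\in F\}$; $N_\varepsilon(Z,d)$ is the maximal cardinality of a subset of $Z$ with pairwise $d$-distances $\ge\varepsilon$; $h_\Sigma(X,M,\rho)=\sup_{\varepsilon>0}\inf_F\inf_{\delta>0}\limsup_i\frac{1}{|D_i|}\log N_\varepsilon(\operatorname{Map}(X,M,\rho,F,\delta,\sigma_i),\rho_\infty^{D_i})$ ($\log 0=-\infty$). For $M$ infinite strongly sofic and $\Sigma$ a strong sofic approximation, this value is the same for all dynamically generating continuous pseudometrics $\rho$, and $h_\Sigma(X,M)$ denotes it (for subshifts one may take $\rho(x,y)=0$ if $x(1_M)=y(1_M)$ and $1$ otherwise). *)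

theory Defs
  imports "HOL-Analysis.Analysis" "HOL-Library.FuncSet"
begin

definition full_shift :: "'a set \<Rightarrow> ('m \<Rightarrow> 'a) set" where
  "full_shift A = (UNIV :: 'm set) \<rightarrow>\<^sub>E A"

definition prodiscrete :: "'a set \<Rightarrow> ('m \<Rightarrow> 'a) topology" where
  "prodiscrete A = product_topology (\<lambda>_. discrete_topology A) (UNIV :: 'm set)"

definition shift :: "'m::monoid_mult \<Rightarrow> ('m \<Rightarrow> 'a) \<Rightarrow> ('m \<Rightarrow> 'a)" where
  "shift m x = (\<lambda>m'. x (m' * m))"

definition subshift :: "'a set \<Rightarrow> ('m::monoid_mult \<Rightarrow> 'a) set \<Rightarrow> bool" where
  "subshift A X \<longleftrightarrow> X \<subseteq> full_shift A \<and> closedin (prodiscrete A) X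
     \<and> (\<forall>m. \<forall>x\<in>X. shift m x \<in> X)"

definition directed_set :: "('i \<Rightarrow> 'i \<Rightarrow> bool) \<Rightarrow> bool" where
  "directed_set le \<longleftrightarrow> (\<forall>i. le i i) \<and> (\<forall>i j k. le i j \<longrightarrow> le j k \<longrightarrow> le i k)
     \<and> (\<forall>i j. \<exists>k. le i k \<and> le j k)"

text \<open>The filter of tails of the directed set (index set = the whole type 'i, nonempty).\<close>
definition net_filter :: "('i \<Rightarrow> 'i \<Rightarrow> bool) \<Rightarrow> 'i filter" where
  "net_filter le = (INF i0. principal {i. le i0 i})"

definition hamming :: "'v set \<Rightarrow> ('v \<Rightarrow> 'v) \<Rightarrow> ('v \<Rightarrow> 'v) \<Rightarrow> real" where
  "hamming D f g = real (card {v\<in>D. f v \<noteq> g v}) / real (card D)"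

definition strong_sofic_approx ::
  "('i \<Rightarrow> 'i \<Rightarrow> bool) \<Rightarrow> ('i \<Rightarrow> 'v set) \<Rightarrow> ('i \<Rightarrow> 'm::monoid_mult \<Rightarrow> 'v \<Rightarrow> 'v) \<Rightarrow> bool" where
  "strong_sofic_approx le D \<sigma> \<longleftrightarrow>
     directed_set le \<and>
     (\<forall>i. finite (D i) \<and> D i \<noteq> {}) \<and>
     (\<forall>i m. \<sigma> i m ` D i \<subseteq> D i) \<and>
     (\<forall>i. \<forall>v\<in>D i. \<sigma> i 1 v = v) \<and>
     (\<forall>m1 m2. ((\<lambda>i. hamming (D i) (\<sigma> i (m1 * m2)) (\<sigma> i m1 \<circ> \<sigma> i m2)) \<longlongrightarrow> 0) (net_filter le)) \<and>
     (\<forall>m1 m2. m1 \<noteq> m2 \<longrightarrow> ((\<lambda>i. hamming (D i) (\<sigma> i m1) (\<sigma> i m2)) \<longlongrightarrow> 1) (net_filter le)) \<and>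
     (\<forall>K. finite K \<longrightarrow> (\<exists>\<Delta>::nat. \<Delta> \<ge> 1 \<and>
        (\<forall>i. \<forall>k\<in>K. \<forall>v\<in>D i. card {w\<in>D i. \<sigma> i k w = v} \<le> \<Delta>)))"

text \<open>The standard dynamically generating pseudometric on a subshift.\<close>
definition rho0 :: "('m::monoid_mult \<Rightarrow> 'a) \<Rightarrow> ('m \<Rightarrow> 'a) \<Rightarrow> real" where
  "rho0 x y = (if x 1 = y 1 then 0 else 1)"

definition rho2 :: "('b \<Rightarrow> 'b \<Rightarrow> real) \<Rightarrow> 'v set \<Rightarrow> ('v \<Rightarrow> 'b) \<Rightarrow> ('v \<Rightarrow> 'b) \<Rightarrow> real" where
  "rho2 \<rho> D \<phi> \<psi> = sqrt ((\<Sum>v\<in>D. (\<rho> (\<phi> v) (\<psi> v))\<^sup>2) / real (card D))"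

definition rhoinf :: "('b \<Rightarrow> 'b \<Rightarrow> real) \<Rightarrow> 'v set \<Rightarrow> ('v \<Rightarrow> 'b) \<Rightarrow> ('v \<Rightarrow> 'b) \<Rightarrow> real" where
  "rhoinf \<rho> D \<phi> \<psi> = Max ((\<lambda>v. \<rho> (\<phi> v) (\<psi> v)) ` D)"

text \<open>Map(X,M,rho,F,delta,sigma) as a subset of X^D (extensional functions D -> X).\<close>
definition sofic_maps ::
  "('m::monoid_mult \<Rightarrow> 'a) set \<Rightarrow> 'v set \<Rightarrow> ('m \<Rightarrow> 'v \<Rightarrow> 'v) \<Rightarrow> 'm set \<Rightarrow> real \<Rightarrow> ('v \<Rightarrow> 'm \<Rightarrow> 'a) set" where
  "sofic_maps X D \<sigma> F \<delta> = {\<phi> \<in> D \<rightarrow>\<^sub>E X.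
      \<forall>m\<in>F. rho2 rho0 D (\<phi> \<circ> \<sigma> m) (\<lambda>v. shift m (\<phi> v)) \<le> \<delta>}"

definition sep_number :: "('b \<Rightarrow> 'b \<Rightarrow> real) \<Rightarrow> real \<Rightarrow> 'b set \<Rightarrow> ereal" where
  "sep_number d \<epsilon> Z = (SUP S \<in> {S. finite S \<and> S \<subseteq> Z \<and>
       (\<forall>x\<in>S. \<forall>y\<in>S. x \<noteq> y \<longrightarrow> d x y \<ge> \<epsilon>)}. ereal (real (card S)))"

definition elog :: "ereal \<Rightarrow> ereal" where
  "elog x = (if x \<le> 0 then -\<infinity> else if x = \<infinity> then \<infinity> else ereal (ln (real_of_ereal x)))"

definition sofic_entropy ::
  "('i \<Rightarrow> 'i \<Rightarrow> bool) \<Rightarrow> ('i \<Rightarrow> 'v set) \<Rightarrow> ('i \<Rightarrow> 'm::monoid_mult \<Rightarrow> 'v \<Rightarrow> 'v)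
     \<Rightarrow> ('m \<Rightarrow> 'a) set \<Rightarrow> ereal" where
  "sofic_entropy le D \<sigma> X =
     (SUP \<epsilon> \<in> {0<..}. INF F \<in> {F. finite F}. INF \<delta> \<in> {0<..}.
        Limsup (net_filter le) (\<lambda>i. ereal (1 / real (card (D i))) *
           elog (sep_number (rhoinf rho0 (D i)) \<epsilon> (sofic_maps X (D i) (\<sigma> i) F \<delta>))))"

end

theory Submission
  imports Defs
begin
lemma eventually_net_filter:
  assumes "directed_set le"
  shows "eventually P (net_filter le) \<longleftrightarrow> (\<exists>i0. \<forall>i. le i0 i \<longrightarrow> P i)"
proof -
  have tr: "\<And>i j k. le i j \<Longrightarrow> le j k \<Longrightarrow> le i k" and up: "\<And>i j. \<exists>k. le i k \<and> le j k"
    using assms unfolding directed_set_def by blast+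
  have *: "\<exists>x\<in>UNIV. principal {i. le x i} \<le> inf (principal {i. le a i}) (principal {i. le b i})" for a b
  proof -
    obtain k where k: "le a k" "le b k" using up by blast
    have "{i. le k i} \<subseteq> {i. le a i} \<inter> {i. le b i}" using k tr by blast
    then show ?thesis by (intro bexI[of _ k]) auto
  qed
  have "eventually P (INF i0\<in>UNIV. principal {i. le i0 i}) \<longleftrightarrow> (\<exists>b\<in>UNIV. eventually P (principal {i. le b i}))"
    using eventually_INF_base[of UNIV "\<lambda>i0. principal {i. le i0 i}" P] * by blast
  then show ?thesis unfolding net_filter_def eventually_principal by simp
qed

lemma net_filter_not_bot:
  assumes "directed_set le" shows "net_filter le \<noteq> bot"
proof
  assume "net_filter le = bot"
  then have "eventually (\<lambda>_. False) (net_filter le)" by simp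
  then have "\<exists>i0. \<forall>i. le i0 i \<longrightarrow> False" by (simp only: eventually_net_filter[OF assms])
  then obtain i0 where "\<forall>i. le i0 i \<longrightarrow> False" ..
  moreover have "le i0 i0" using assms unfolding directed_set_def by simp
  ultimately show False by simp
qed
lemma elog_pos: "elog (ereal (real a)) = (if a = 0 then -\<infinity> else ereal (ln (real a)))"
  by (auto simp: elog_def)

lemma val_ub:
  assumes "n > 0" "R > 0" "s \<le> ereal R"
  shows "ereal (1 / real n) * elog s \<le> ereal (ln R / real n)"
proof (cases "s \<le> 0")
  case True then show ?thesis using assms by (simp add: elog_def)
next
  case False
  then obtain r where r: "s = ereal r" "r > 0" "r \<le> R" using assms
    by (cases s) auto
  then have "ln r \<le> ln R" by simp
  then show ?thesis using r assms by (simp add: elog_def divide_right_mono)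
qed

lemma val_lb:
  assumes "n > 0" "R > 0" "s \<ge> ereal R"
  shows "ereal (1 / real n) * elog s \<ge> ereal (ln R / real n)"
proof (cases s)
  case (real r)
  then have "r > 0" "r \<ge> R" using assms by auto
  then show ?thesis using real assms by (simp add: elog_def divide_right_mono)
next
  case PInf then show ?thesis using assms by (simp add: elog_def)
next
  case MInf then show ?thesis using assms by simp
qed


lemma sep_ub:
  assumes "\<And>S. finite S \<Longrightarrow> S \<subseteq> Z \<Longrightarrow> (\<forall>x\<in>S. \<forall>y\<in>S. x \<noteq> y \<longrightarrow> d x y \<ge> \<epsilon>) \<Longrightarrow> real (card S) \<le> R"
  shows "sep_number d \<epsilon> Z \<le> ereal R"
  unfolding sep_number_def by (rule SUP_least) (use assms in auto)

lemma sep_lb: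
  assumes "finite S" "S \<subseteq> Z" "\<forall>x\<in>S. \<forall>y\<in>S. x \<noteq> y \<longrightarrow> d x y \<ge> \<epsilon>"
  shows "ereal (real (card S)) \<le> sep_number d \<epsilon> Z"
  unfolding sep_number_def by (rule SUP_upper) (use assms in auto)


lemma entropy_ub:
  assumes "\<And>\<epsilon>. \<epsilon> > 0 \<Longrightarrow> \<exists>F \<delta>. finite F \<and> \<delta> > 0 \<and> eventually (\<lambda>i. ereal (1 / real (card (D i))) *
           elog (sep_number (rhoinf rho0 (D i)) \<epsilon> (sofic_maps X (D i) (\<sigma> i) F \<delta>)) \<le> C) (net_filter le)"
  shows "sofic_entropy le D \<sigma> X \<le> C"
  unfolding sofic_entropy_def
proof (rule SUP_least)
  fix \<epsilon> :: real assume "\<epsilon> \<in> {0<..}"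
  then obtain F \<delta> where *: "finite F" "\<delta> > 0" and ev: "eventually (\<lambda>i. ereal (1 / real (card (D i))) *
           elog (sep_number (rhoinf rho0 (D i)) \<epsilon> (sofic_maps X (D i) (\<sigma> i) F \<delta>)) \<le> C) (net_filter le)"
    using assms by force
  show "(INF F \<in> {F. finite F}. INF \<delta> \<in> {0<..}. Limsup (net_filter le) (\<lambda>i. ereal (1 / real (card (D i))) *
           elog (sep_number (rhoinf rho0 (D i)) \<epsilon> (sofic_maps X (D i) (\<sigma> i) F \<delta>)))) \<le> C"
    by (rule INF_lower2[of F], use * in simp, rule INF_lower2[of \<delta>], use * in simp, rule Limsup_bounded[OF ev])
qed

lemma entropy_lb:
  assumes "net_filter le \<noteq> bot" "\<epsilon> > 0"
   "\<And>F \<delta>. finite F \<Longrightarrow> \<delta> > 0 \<Longrightarrow> eventually (\<lambda>i. C \<le> ereal (1 / real (card (D i))) *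
           elog (sep_number (rhoinf rho0 (D i)) \<epsilon> (sofic_maps X (D i) (\<sigma> i) F \<delta>))) (net_filter le)"
  shows "C \<le> sofic_entropy le D \<sigma> X"
  unfolding sofic_entropy_def
  by (rule SUP_upper2[of \<epsilon>], use assms in simp, intro INF_greatest le_Limsup, use assms in auto)


lemma chernoff:
  fixes B :: "'b set" and W :: "'w set" and p :: 'b and m :: nat and t :: real
  assumes fB: "finite B" and fW: "finite W" and pB: "p \<in> B" and t: "0 < t" "t \<le> 1"
  shows "real (card {P \<in> W \<rightarrow>\<^sub>E B. card {w\<in>W. P w = p} \<le> m}) \<le> (1/t)^m * (real (card B) - 1 + t)^(card W)"
proof -
  define S where "S = {P \<in> W \<rightarrow>\<^sub>E B. card {w\<in>W. P w = p} \<le> m}"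
  have fPi: "finite (W \<rightarrow>\<^sub>E B)" using fB fW by (simp add: finite_PiE)
  have SS: "S \<subseteq> W \<rightarrow>\<^sub>E B" unfolding S_def by auto
  have fS: "finite S" using fPi SS finite_subset by blast
  have pw: "(\<Prod>w\<in>W. if P w = p then t else 1) = t ^ card {w\<in>W. P w = p}" for P
  proof -
    have "(\<Prod>w\<in>W. if P w = p then t else 1) = (\<Prod>w\<in>{w\<in>W. P w = p}. t)"
      using fW by (simp add: prod.If_cases Int_def)
    then show ?thesis by simp
  qed
  have "real (card S) = (\<Sum>P\<in>S. 1)" by simp
  also have "\<dots> \<le> (\<Sum>P\<in>S. (1/t)^m * t ^ card {w\<in>W. P w = p})"
  proof (rule sum_mono)
    fix P assume "P \<in> S"
    then have c: "card {w\<in>W. P w = p} \<le> m" unfolding S_def by auto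
    have "t ^ m \<le> t ^ card {w\<in>W. P w = p}" using power_decreasing[OF c, of t] t by simp
    then have "(1/t)^m * t^m \<le> (1/t)^m * t ^ card {w\<in>W. P w = p}"
      by (intro mult_left_mono) (use t in auto)
    moreover have "(1/t)^m * t^m = 1" using t by (simp add: power_mult_distrib[symmetric])
    ultimately show "1 \<le> (1/t)^m * t ^ card {w\<in>W. P w = p}" by simp
  qed
  also have "\<dots> \<le> (\<Sum>P\<in>W \<rightarrow>\<^sub>E B. (1/t)^m * t ^ card {w\<in>W. P w = p})"
    by (rule sum_mono2[OF fPi SS]) (use t in auto)
  also have "\<dots> = (1/t)^m * (\<Sum>P\<in>W \<rightarrow>\<^sub>E B. \<Prod>w\<in>W. if P w = p then t else 1)"
    by (simp add: sum_distrib_left pw)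
  also have "(\<Sum>P\<in>W \<rightarrow>\<^sub>E B. \<Prod>w\<in>W. if P w = p then t else 1) = (\<Prod>w\<in>W. \<Sum>y\<in>B. if y = p then t else 1)"
    using prod_sum_PiE[of W "\<lambda>_. B" "\<lambda>_ y. if y = p then t else (1::real)"] fW fB by simp
  also have "(\<Sum>y\<in>B. if y = p then t else (1::real)) = real (card B) - 1 + t"
  proof -
    have "(\<Sum>y\<in>B. if y = p then t else (1::real)) = t + (\<Sum>y\<in>B - {p}. 1)"
      using sum.remove[OF fB pB, of "\<lambda>y. if y = p then t else (1::real)"] by simp
    also have "\<dots> = t + (real (card B) - 1)"
    proof -
      have "card B \<ge> 1" proof -
        have "B \<noteq> {}" using pB by blast
        then have "card B > 0" using fB by (simp add: card_gt_0_iff)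
        then show ?thesis by simp
      qed
      then show ?thesis using fB pB by (simp add: card_Diff_singleton of_nat_diff)
    qed
    finally show ?thesis by simp
  qed
  finally show ?thesis unfolding S_def by simp
qed

lemma greedy:
  fixes G :: "'v set" and R :: "'v \<Rightarrow> 'v \<Rightarrow> bool" and d :: nat
  assumes fG: "finite G" and deg: "\<And>v. v \<in> G \<Longrightarrow> card {w\<in>G. R v w} \<le> d"
    and sym: "\<And>v w. R v w \<Longrightarrow> R w v"
  shows "\<exists>W \<subseteq> G. (\<forall>w\<in>W. \<forall>w'\<in>W. w \<noteq> w' \<longrightarrow> \<not> R w w') \<and> card G \<le> (d+1) * card W"
proof -
  define Ind where "Ind = (\<lambda>W. W \<subseteq> G \<and> (\<forall>w\<in>W. \<forall>w'\<in>W. w \<noteq> w' \<longrightarrow> \<not> R w w'))"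
  have "Ind {}" unfolding Ind_def by simp
  moreover have "\<forall>W. Ind W \<longrightarrow> card W < card G + 1"
  proof (intro allI impI)
    fix W assume "Ind W"
    then have "W \<subseteq> G" unfolding Ind_def by simp
    then have "card W \<le> card G" by (rule card_mono[OF fG])
    then show "card W < card G + 1" by simp
  qed
  ultimately have "\<exists>x. Ind x \<and> (\<forall>y. Ind y \<longrightarrow> card y \<le> card x)"
    by (rule Lattices_Big.ex_has_greatest_nat[of Ind "{}" card "card G + 1"])
  then obtain W where W: "Ind W" and mx0: "\<forall>y. Ind y \<longrightarrow> card y \<le> card W" by blast
  have mx: "\<And>W'. Ind W' \<Longrightarrow> card W' \<le> card W" using mx0 by blast
  have WG: "W \<subseteq> G" using W unfolding Ind_def by simp
  have fW: "finite W" using WG fG finite_subset by blast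
  have cover: "G \<subseteq> W \<union> (\<Union>w\<in>W. {g\<in>G. R w g})"
  proof
    fix g assume g: "g \<in> G"
    show "g \<in> W \<union> (\<Union>w\<in>W. {g\<in>G. R w g})"
    proof (rule ccontr)
      assume ng: "g \<notin> W \<union> (\<Union>w\<in>W. {g\<in>G. R w g})"
      have n1: "\<forall>w\<in>W. \<not> R w g" using ng g by blast
      have n2: "\<forall>w\<in>W. \<not> R g w" using n1 sym by metis
      have "Ind (insert g W)" using W g n1 n2 unfolding Ind_def by auto
      then have "card (insert g W) \<le> card W" by (rule mx)
      moreover have "card (insert g W) = card W + 1" using fW ng by simp
      ultimately show False by simp
    qed
  qed
  have "card G \<le> card (W \<union> (\<Union>w\<in>W. {g\<in>G. R w g}))"
    by (rule card_mono[OF _ cover]) (use fW fG in auto)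
  also have "\<dots> \<le> card W + card (\<Union>w\<in>W. {g\<in>G. R w g})" by (rule card_Un_le)
  also have "\<dots> \<le> card W + (\<Sum>w\<in>W. card {g\<in>G. R w g})" by (rule add_left_mono[OF card_UN_le[OF fW]])
  also have "\<dots> \<le> card W + (\<Sum>w\<in>W. d)" by (rule add_left_mono, rule sum_mono) (use WG deg in auto)
  also have "(\<Sum>w\<in>W. d) = card W * d" by simp
  finally have "card G \<le> card W + card W * d" .
  moreover have "card W * d = d * card W" by (rule mult.commute)
  moreover have "(d+1) * card W = d * card W + 1 * card W" by (rule add_mult_distrib)
  ultimately have "card G \<le> (d+1) * card W" by linarith
  moreover have "\<forall>w\<in>W. \<forall>w'\<in>W. w \<noteq> w' \<longrightarrow> \<not> R w w'" using W unfolding Ind_def by simp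
  ultimately show ?thesis using WG by (intro exI[of _ W]) simp
qed

lemma window_count:
  fixes D :: "'v set" and A :: "'a set" and K :: "'m set" and W :: "'v set"
    and s :: "'m \<Rightarrow> 'v \<Rightarrow> 'v" and p :: "'m \<Rightarrow> 'a" and m :: nat and t :: real
  assumes fD: "finite D" and fA: "finite A" and Ane: "A \<noteq> {}" and fK: "finite K" and WD: "W \<subseteq> D"
    and sD: "\<And>w k. w \<in> W \<Longrightarrow> k \<in> K \<Longrightarrow> s k w \<in> D"
    and inj: "\<And>w. w \<in> W \<Longrightarrow> inj_on (\<lambda>k. s k w) K"
    and disj: "\<And>w w'. w \<in> W \<Longrightarrow> w' \<in> W \<Longrightarrow> w \<noteq> w' \<Longrightarrow> (\<lambda>k. s k w) ` K \<inter> (\<lambda>k. s k w') ` K = {}"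
    and pA: "p \<in> K \<rightarrow>\<^sub>E A" and t: "0 < t" "t \<le> 1"
  shows "real (card {\<omega> \<in> D \<rightarrow>\<^sub>E A. card {w\<in>W. (\<lambda>k\<in>K. \<omega> (s k w)) = p} \<le> m})
     \<le> real (card A) ^ card D * (1/t)^m * (1 - (1-t) / real (card A) ^ card K) ^ card W"
proof -
  define U where "U = (\<Union>w\<in>W. (\<lambda>k. s k w) ` K)"
  define G where "G = {\<omega> \<in> D \<rightarrow>\<^sub>E A. card {w\<in>W. (\<lambda>k\<in>K. \<omega> (s k w)) = p} \<le> m}"
  define T where "T = {P \<in> W \<rightarrow>\<^sub>E (K \<rightarrow>\<^sub>E A). card {w\<in>W. P w = p} \<le> m}"
  define \<Phi> where "\<Phi> = (\<lambda>\<omega>::'v\<Rightarrow>'a. (restrict \<omega> (D - U), \<lambda>w\<in>W. \<lambda>k\<in>K. \<omega> (s k w)))"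
  have fW: "finite W" using WD fD finite_subset by blast
  have UD: "U \<subseteq> D" unfolding U_def using sD by blast
  have cardU: "card U = card W * card K"
  proof -
    have "card U = (\<Sum>w\<in>W. card ((\<lambda>k. s k w) ` K))"
      unfolding U_def by (rule card_UN_disjoint[OF fW]) (use fK disj in simp_all)
    also have "\<dots> = (\<Sum>w\<in>W. card K)" by (rule sum.cong) (simp_all add: card_image inj)
    finally show ?thesis by simp
  qed
  have injP: "inj_on \<Phi> G"
  proof (rule inj_onI)
    fix \<omega>1 \<omega>2 assume g1: "\<omega>1 \<in> G" and g2: "\<omega>2 \<in> G" and eq: "\<Phi> \<omega>1 = \<Phi> \<omega>2"
    have e1: "\<omega>1 \<in> D \<rightarrow>\<^sub>E A" and e2: "\<omega>2 \<in> D \<rightarrow>\<^sub>E A" using g1 g2 unfolding G_def by simp_all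
    have r: "restrict \<omega>1 (D - U) = restrict \<omega>2 (D - U)" using arg_cong[OF eq, of fst] unfolding \<Phi>_def by (simp only: fst_conv)
    have w: "(\<lambda>w\<in>W. \<lambda>k\<in>K. \<omega>1 (s k w)) = (\<lambda>w\<in>W. \<lambda>k\<in>K. \<omega>2 (s k w))" using arg_cong[OF eq, of snd] unfolding \<Phi>_def by (simp only: snd_conv)
    show "\<omega>1 = \<omega>2"
    proof
      fix x
      show "\<omega>1 x = \<omega>2 x"
      proof (cases "x \<in> D")
        case False then show ?thesis using PiE_arb[OF e1 False] PiE_arb[OF e2 False] by (simp only:)
      next
        case True
        show ?thesis
        proof (cases "x \<in> U")
          case False
          then show ?thesis using True r by (metis Diff_iff restrict_apply')
        next
          case xU: True
          then obtain w k where wk: "w \<in> W" "k \<in> K" "x = s k w" unfolding U_def by blast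
          have "(\<lambda>k\<in>K. \<omega>1 (s k w)) k = (\<lambda>k\<in>K. \<omega>2 (s k w)) k"
            using fun_cong[OF w, of w] wk(1) by simp
          then show ?thesis using wk by simp
        qed
      qed
    qed
  qed
  have img: "\<Phi> ` G \<subseteq> (D - U \<rightarrow>\<^sub>E A) \<times> T"
  proof
    fix y assume "y \<in> \<Phi> ` G"
    then obtain \<omega> where g: "\<omega> \<in> G" and y: "y = \<Phi> \<omega>" by blast
    have e: "\<omega> \<in> D \<rightarrow>\<^sub>E A" and c: "card {w\<in>W. (\<lambda>k\<in>K. \<omega> (s k w)) = p} \<le> m"
      using g unfolding G_def by simp_all
    have "restrict \<omega> (D - U) \<in> D - U \<rightarrow>\<^sub>E A" using e by auto
    moreover have "(\<lambda>w\<in>W. \<lambda>k\<in>K. \<omega> (s k w)) \<in> W \<rightarrow>\<^sub>E (K \<rightarrow>\<^sub>E A)"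
      using e sD by (auto simp: PiE_iff)
    moreover have "{w\<in>W. (\<lambda>w\<in>W. \<lambda>k\<in>K. \<omega> (s k w)) w = p} = {w\<in>W. (\<lambda>k\<in>K. \<omega> (s k w)) = p}"
      by auto
    ultimately show "y \<in> (D - U \<rightarrow>\<^sub>E A) \<times> T" unfolding y \<Phi>_def T_def using c by simp
  qed
  have fPi1: "finite (D - U \<rightarrow>\<^sub>E A)" using fD fA by (simp add: finite_PiE)
  have fT: "finite T" unfolding T_def using fW fK fA by (simp add: finite_PiE)
  have "card G = card (\<Phi> ` G)" using injP by (simp add: card_image)
  also have "\<dots> \<le> card ((D - U \<rightarrow>\<^sub>E A) \<times> T)" by (rule card_mono[OF _ img]) (use fPi1 fT in simp)
  also have "\<dots> = card (D - U \<rightarrow>\<^sub>E A) * card T" by (rule card_cartesian_product)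
  finally have cG: "real (card G) \<le> real (card (D - U \<rightarrow>\<^sub>E A)) * real (card T)" by (simp only: of_nat_le_iff of_nat_mult[symmetric])
  have c1: "card (D - U \<rightarrow>\<^sub>E A) = card A ^ (card D - card U)"
    using fD UD by (simp add: card_PiE card_Diff_subset finite_subset)
  have cB: "card (K \<rightarrow>\<^sub>E A) = card A ^ card K" using fK by (simp add: card_PiE)
  have pB: "p \<in> K \<rightarrow>\<^sub>E A" by (rule pA)
  have cT: "real (card T) \<le> (1/t)^m * (real (card A ^ card K) - 1 + t) ^ card W"
    unfolding T_def using chernoff[of "K \<rightarrow>\<^sub>E A" W p t m] fK fA fW pB t cB by (simp add: finite_PiE)
  define a where "a = real (card A)"
  define b where "b = a ^ card K"
  have apos: "a > 0" unfolding a_def using fA Ane by (simp add: card_gt_0_iff)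
  have bpos: "b > 0" unfolding b_def using apos by simp
  have Un: "card U \<le> card D" using card_mono[OF fD UD] .
  have "real (card G) \<le> a ^ (card D - card U) * ((1/t)^m * (b - 1 + t) ^ card W)"
    using cG c1 cT unfolding a_def b_def
    by (smt (verit) mult_left_mono of_nat_0_le_iff of_nat_power zero_le_power)
  also have "b - 1 + t = b * (1 - (1-t)/b)" using bpos by (simp add: field_simps)
  also have "(b * (1 - (1-t)/b)) ^ card W = a ^ card U * (1 - (1-t)/b) ^ card W"
    unfolding b_def cardU by (simp add: power_mult_distrib power_mult mult.commute)
  also have "a ^ (card D - card U) * ((1/t)^m * (a ^ card U * (1 - (1-t)/b) ^ card W))
      = (a ^ (card D - card U) * a ^ card U) * (1/t)^m * (1 - (1-t)/b) ^ card W" by (simp add: ac_simps)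
  also have "a ^ (card D - card U) * a ^ card U = a ^ card D" using Un by (simp add: power_add[symmetric])
  finally show ?thesis unfolding G_def a_def b_def .
qed


lemma rhoinf_pos:
  fixes \<phi> \<psi> :: "'v \<Rightarrow> 'm::monoid_mult \<Rightarrow> 'a"
  assumes "finite D" "D \<noteq> {}" "rhoinf rho0 D \<phi> \<psi> > 0"
  shows "\<exists>v\<in>D. \<phi> v 1 \<noteq> \<psi> v 1"
proof -
  have "Max ((\<lambda>v. rho0 (\<phi> v) (\<psi> v)) ` D) \<in> (\<lambda>v. rho0 (\<phi> v) (\<psi> v)) ` D"
    using assms(1,2) by (intro Max_in) simp_all
  then obtain v where v: "v \<in> D" "rhoinf rho0 D \<phi> \<psi> = rho0 (\<phi> v) (\<psi> v)"
    unfolding rhoinf_def by blast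
  then have "rho0 (\<phi> v) (\<psi> v) \<noteq> 0" using assms(3) by simp
  then show ?thesis using v(1) unfolding rho0_def by (auto split: if_splits)
qed

lemma sep_inj:
  fixes S :: "('v \<Rightarrow> 'm::monoid_mult \<Rightarrow> 'a) set"
  assumes "finite D" "D \<noteq> {}" "\<epsilon> > 0"
    and sep: "\<forall>x\<in>S. \<forall>y\<in>S. x \<noteq> y \<longrightarrow> rhoinf rho0 D x y \<ge> \<epsilon>"
  shows "inj_on (\<lambda>\<phi>. restrict (\<lambda>v. \<phi> v 1) D) S"
proof (rule inj_onI, rule ccontr)
  fix x y assume xy: "x \<in> S" "y \<in> S" "restrict (\<lambda>v. x v 1) D = restrict (\<lambda>v. y v 1) D" "x \<noteq> y"
  then have "rhoinf rho0 D x y > 0" using sep assms(3) by force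
  then obtain v where "v \<in> D" "x v 1 \<noteq> y v 1" using rhoinf_pos assms(1,2) by blast
  moreover have "restrict (\<lambda>v. x v 1) D v = restrict (\<lambda>v. y v 1) D v" using xy(3) by simp
  ultimately show False by simp
qed

lemma sep_upper_all:
  fixes X :: "('m::monoid_mult \<Rightarrow> 'a) set" and \<sigma> :: "'m \<Rightarrow> 'v \<Rightarrow> 'v"
  assumes fD: "finite D" and Dne: "D \<noteq> {}" and fA: "finite A" and XA: "X \<subseteq> full_shift A" and e: "\<epsilon> > 0"
  shows "sep_number (rhoinf rho0 D) \<epsilon> (sofic_maps X D \<sigma> F \<delta>) \<le> ereal (real (card A) ^ card D)"
proof (rule sep_ub)
  fix S assume fS: "finite S" and SZ: "S \<subseteq> sofic_maps X D \<sigma> F \<delta>"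
    and sep: "\<forall>x\<in>S. \<forall>y\<in>S. x \<noteq> y \<longrightarrow> rhoinf rho0 D x y \<ge> \<epsilon>"
  have inj: "inj_on (\<lambda>\<phi>. restrict (\<lambda>v. \<phi> v 1) D) S" by (rule sep_inj[OF fD Dne e sep])
  have sub: "(\<lambda>\<phi>. restrict (\<lambda>v. \<phi> v 1) D) ` S \<subseteq> D \<rightarrow>\<^sub>E A"
  proof
    fix z assume "z \<in> (\<lambda>\<phi>. restrict (\<lambda>v. \<phi> v 1) D) ` S"
    then obtain \<phi> where p: "\<phi> \<in> S" "z = restrict (\<lambda>v. \<phi> v 1) D" by blast
    have "\<phi> \<in> D \<rightarrow>\<^sub>E X" using p(1) SZ unfolding sofic_maps_def by blast
    then have "\<forall>v\<in>D. \<phi> v \<in> full_shift A" using XA by blast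
    then have "\<forall>v\<in>D. \<phi> v 1 \<in> A" unfolding full_shift_def by blast
    then show "z \<in> D \<rightarrow>\<^sub>E A" using p(2) by simp
  qed
  have "card S = card ((\<lambda>\<phi>. restrict (\<lambda>v. \<phi> v 1) D) ` S)" using inj by (simp add: card_image)
  also have "\<dots> \<le> card (D \<rightarrow>\<^sub>E A)" by (rule card_mono[OF _ sub]) (use fD fA in \<open>simp add: finite_PiE\<close>)
  also have "\<dots> = card A ^ card D" using fD by (simp add: card_PiE)
  finally show "real (card S) \<le> real (card A) ^ card D" by (simp only: of_nat_le_iff of_nat_power[symmetric])
qed

lemma sep_lower_full:
  fixes \<sigma> :: "'m::monoid_mult \<Rightarrow> 'v \<Rightarrow> 'v" and A :: "'a set"
  assumes fD: "finite D" and Dne: "D \<noteq> {}" and fA: "finite A" and sD: "\<And>m. \<sigma> m ` D \<subseteq> D"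
    and s1: "\<And>v. v \<in> D \<Longrightarrow> \<sigma> 1 v = v" and e: "\<epsilon> \<le> 1" and d: "\<delta> \<ge> 0"
  shows "ereal (real (card A) ^ card D) \<le> sep_number (rhoinf rho0 D) \<epsilon> (sofic_maps (full_shift A) D \<sigma> F \<delta>)"
proof -
  define lift where "lift = (\<lambda>\<omega>::'v\<Rightarrow>'a. \<lambda>v\<in>D. \<lambda>m. \<omega> (\<sigma> m v))"
  define S where "S = lift ` (D \<rightarrow>\<^sub>E A)"
  have l1: "lift \<omega> v 1 = \<omega> v" if "v \<in> D" for \<omega> v using that s1 unfolding lift_def by simp
  have inj: "inj_on lift (D \<rightarrow>\<^sub>E A)"
  proof (rule inj_onI)
    fix \<omega>1 \<omega>2 assume e1: "\<omega>1 \<in> D \<rightarrow>\<^sub>E A" and e2: "\<omega>2 \<in> D \<rightarrow>\<^sub>E A" and eq: "lift \<omega>1 = lift \<omega>2"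
    show "\<omega>1 = \<omega>2"
    proof
      fix v show "\<omega>1 v = \<omega>2 v"
      proof (cases "v \<in> D")
        case True
        then show ?thesis using l1[OF True, of \<omega>1] l1[OF True, of \<omega>2] eq by simp
      next
        case False
        then show ?thesis using PiE_arb[OF e1 False] PiE_arb[OF e2 False] by (simp only:)
      qed
    qed
  qed
  have fS: "finite S" unfolding S_def using fD fA by (simp add: finite_PiE)
  have cS: "card S = card A ^ card D" unfolding S_def using inj fD by (simp add: card_image card_PiE)
  have SZ: "S \<subseteq> sofic_maps (full_shift A) D \<sigma> F \<delta>"
  proof
    fix \<phi> assume "\<phi> \<in> S"
    then obtain \<omega> where o: "\<omega> \<in> D \<rightarrow>\<^sub>E A" and ph: "\<phi> = lift \<omega>" unfolding S_def by blast
    have inX: "\<phi> \<in> D \<rightarrow>\<^sub>E full_shift A"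
    proof -
      have "\<forall>v\<in>D. \<forall>m. \<sigma> m v \<in> D" using sD by blast
      then have "\<forall>v\<in>D. (\<lambda>m. \<omega> (\<sigma> m v)) \<in> full_shift A" using o unfolding full_shift_def by auto
      then show ?thesis unfolding ph lift_def by simp
    qed
    have "rho2 rho0 D (\<phi> \<circ> \<sigma> m) (\<lambda>v. shift m (\<phi> v)) \<le> \<delta>" for m
    proof -
      have "\<forall>v\<in>D. rho0 ((\<phi> \<circ> \<sigma> m) v) (shift m (\<phi> v)) = 0"
      proof
        fix v assume v: "v \<in> D"
        have "\<sigma> m v \<in> D" using sD v by blast
        then have "(\<phi> \<circ> \<sigma> m) v 1 = \<omega> (\<sigma> m v)" using l1 ph by simp
        moreover have "shift m (\<phi> v) 1 = \<omega> (\<sigma> m v)" unfolding shift_def ph lift_def using v by simp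
        ultimately show "rho0 ((\<phi> \<circ> \<sigma> m) v) (shift m (\<phi> v)) = 0" unfolding rho0_def by simp
      qed
      then have "rho2 rho0 D (\<phi> \<circ> \<sigma> m) (\<lambda>v. shift m (\<phi> v)) = 0" unfolding rho2_def by simp
      then show ?thesis using d by simp
    qed
    then show "\<phi> \<in> sofic_maps (full_shift A) D \<sigma> F \<delta>" unfolding sofic_maps_def using inX by simp
  qed
  have sep: "\<forall>x\<in>S. \<forall>y\<in>S. x \<noteq> y \<longrightarrow> rhoinf rho0 D x y \<ge> \<epsilon>"
  proof (intro ballI impI)
    fix x y assume xy: "x \<in> S" "y \<in> S" "x \<noteq> y"
    obtain \<omega>1 where o1: "\<omega>1 \<in> D \<rightarrow>\<^sub>E A" "x = lift \<omega>1" using xy(1) unfolding S_def by blast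
    obtain \<omega>2 where o2: "\<omega>2 \<in> D \<rightarrow>\<^sub>E A" "y = lift \<omega>2" using xy(2) unfolding S_def by blast
    have "\<omega>1 \<noteq> \<omega>2" using o1 o2 xy(3) by blast
    then obtain v where v: "\<omega>1 v \<noteq> \<omega>2 v" by blast
    have vD: "v \<in> D"
    proof (rule ccontr)
      assume "v \<notin> D"
      then show False using PiE_arb[OF o1(1)] PiE_arb[OF o2(1)] v by simp
    qed
    then have "x v 1 \<noteq> y v 1" using l1 o1 o2 v by simp
    then have r: "rho0 (x v) (y v) = 1" unfolding rho0_def by simp
    have "rho0 (x v) (y v) \<le> rhoinf rho0 D x y" unfolding rhoinf_def
      by (rule Max_ge) (use fD vD in simp_all)
    then show "\<epsilon> \<le> rhoinf rho0 D x y" using r e by simp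
  qed
  show ?thesis using sep_lb[OF fS SZ sep] cS by simp
qed

lemma bad_count:
  fixes X :: "('m::monoid_mult \<Rightarrow> 'a) set" and \<sigma> :: "'m \<Rightarrow> 'v \<Rightarrow> 'v"
  assumes fD: "finite D" and Dne: "D \<noteq> {}" and ph: "\<phi> \<in> sofic_maps X D \<sigma> K \<delta>" and k: "k \<in> K"
  shows "real (card {v\<in>D. \<phi> (\<sigma> k v) 1 \<noteq> \<phi> v k}) \<le> \<delta>^2 * real (card D)"
proof -
  have r: "rho2 rho0 D (\<phi> \<circ> \<sigma> k) (\<lambda>v. shift k (\<phi> v)) \<le> \<delta>" using ph k unfolding sofic_maps_def by blast
  have n: "real (card D) > 0" using fD Dne by (simp add: card_gt_0_iff)
  have eqs: "(\<Sum>v\<in>D. (rho0 ((\<phi> \<circ> \<sigma> k) v) (shift k (\<phi> v)))\<^sup>2) = (\<Sum>v\<in>D. if \<phi> (\<sigma> k v) 1 \<noteq> \<phi> v k then 1 else 0)"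
    by (rule sum.cong) (simp_all add: rho0_def shift_def)
  also have "\<dots> = real (card {v\<in>D. \<phi> (\<sigma> k v) 1 \<noteq> \<phi> v k})"
    using sum.inter_filter[OF fD, of "\<lambda>_. (1::real)" "\<lambda>v. \<phi> (\<sigma> k v) 1 \<noteq> \<phi> v k"] by simp
  finally have e2: "(\<Sum>v\<in>D. (rho0 ((\<phi> \<circ> \<sigma> k) v) (shift k (\<phi> v)))\<^sup>2) = real (card {v\<in>D. \<phi> (\<sigma> k v) 1 \<noteq> \<phi> v k})" .
  have "real (card {v\<in>D. \<phi> (\<sigma> k v) 1 \<noteq> \<phi> v k}) / real (card D) \<le> \<delta>^2"
    using sqrt_le_D[OF r[unfolded rho2_def]] e2 by simp
  then show ?thesis using n by (simp add: divide_le_eq)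
qed


lemma key_bound:
  fixes X :: "('m::monoid_mult \<Rightarrow> 'a) set" and \<sigma> :: "'m \<Rightarrow> 'v \<Rightarrow> 'v" and p :: "'m \<Rightarrow> 'a"
    and K :: "'m set" and A :: "'a set" and D :: "'v set"
  assumes fD: "finite D" and Dne: "D \<noteq> {}" and fA: "finite A" and Ane: "A \<noteq> {}" and fK: "finite K"
    and sD: "\<And>m. \<sigma> m ` D \<subseteq> D" and XA: "X \<subseteq> full_shift A"
    and avoid: "\<forall>x\<in>X. \<exists>k\<in>K. x k \<noteq> p k" and pA: "p \<in> K \<rightarrow>\<^sub>E A"
    and Dl: "\<forall>k\<in>K. \<forall>v\<in>D. card {w\<in>D. \<sigma> k w = v} \<le> \<Delta>"
    and good: "2 * card {v\<in>D. \<not> inj_on (\<lambda>k. \<sigma> k v) K} \<le> card D"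
    and e: "\<epsilon> > 0"
  shows "\<exists>w. card D \<le> 2 * (card K * card K * \<Delta> + 1) * w \<and>
    sep_number (rhoinf rho0 D) \<epsilon> (sofic_maps X D \<sigma> K \<delta>) \<le>
      ereal (real (card A) ^ card D * 2 ^ (nat \<lfloor>real (card K) * \<delta>\<^sup>2 * real (card D)\<rfloor>)
         * (1 - 1 / (2 * real (card A) ^ card K)) ^ w)"
proof -
  define Good where "Good = {v\<in>D. inj_on (\<lambda>k. \<sigma> k v) K}"
  define R where "R = (\<lambda>v w. \<exists>k\<in>K. \<exists>k'\<in>K. \<sigma> k v = \<sigma> k' w)"
  define d where "d = card K * card K * \<Delta>"
  define M where "M = nat \<lfloor>real (card K) * \<delta>\<^sup>2 * real (card D)\<rfloor>"
  have sDv: "\<And>m v. v \<in> D \<Longrightarrow> \<sigma> m v \<in> D" using sD by blast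
  have fG: "finite Good" unfolding Good_def using fD by simp
  have GD: "Good \<subseteq> D" unfolding Good_def by blast
  have cGood: "card D \<le> 2 * card Good"
  proof -
    have "D = Good \<union> {v\<in>D. \<not> inj_on (\<lambda>k. \<sigma> k v) K}" unfolding Good_def by blast
    then have "card D \<le> card Good + card {v\<in>D. \<not> inj_on (\<lambda>k. \<sigma> k v) K}"
      by (metis card_Un_le)
    then show ?thesis using good by linarith
  qed
  have symR: "\<And>v w. R v w \<Longrightarrow> R w v" unfolding R_def by metis
  have deg: "card {w\<in>Good. R v w} \<le> d" if v: "v \<in> Good" for v
  proof -
    have vD: "v \<in> D" using v GD by blast
    have "{w\<in>Good. R v w} \<subseteq> (\<Union>k\<in>K. \<Union>k'\<in>K. {w\<in>D. \<sigma> k' w = \<sigma> k v})"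
    proof
      fix w assume "w \<in> {w\<in>Good. R v w}"
      then have wG: "w \<in> Good" and Rw: "R v w" by simp_all
      from Rw obtain k k' where kk: "k \<in> K" "k' \<in> K" "\<sigma> k v = \<sigma> k' w" unfolding R_def by blast
      have "w \<in> {w\<in>D. \<sigma> k' w = \<sigma> k v}" using kk(3) wG GD by auto
      then have "w \<in> (\<Union>k'\<in>K. {w\<in>D. \<sigma> k' w = \<sigma> k v})" by (rule UN_I[OF kk(2)])
      then show "w \<in> (\<Union>k\<in>K. \<Union>k'\<in>K. {w\<in>D. \<sigma> k' w = \<sigma> k v})" by (rule UN_I[OF kk(1)])
    qed
    then have "card {w\<in>Good. R v w} \<le> card (\<Union>k\<in>K. \<Union>k'\<in>K. {w\<in>D. \<sigma> k' w = \<sigma> k v})"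
      by (rule card_mono[rotated]) (use fD fK in simp)
    also have "\<dots> \<le> (\<Sum>k\<in>K. card (\<Union>k'\<in>K. {w\<in>D. \<sigma> k' w = \<sigma> k v}))" by (rule card_UN_le[OF fK])
    also have "\<dots> \<le> (\<Sum>k\<in>K. \<Sum>k'\<in>K. card {w\<in>D. \<sigma> k' w = \<sigma> k v})"
      by (rule sum_mono, rule card_UN_le[OF fK])
    also have "\<dots> \<le> (\<Sum>k\<in>K. \<Sum>k'\<in>K. \<Delta>)"
      by (rule sum_mono, rule sum_mono) (use Dl sDv vD in simp)
    also have "\<dots> = d" unfolding d_def by simp
    finally show ?thesis .
  qed
  have "\<exists>W. W \<subseteq> Good \<and> (\<forall>w\<in>W. \<forall>w'\<in>W. w \<noteq> w' \<longrightarrow> \<not> R w w') \<and> card Good \<le> (d+1) * card W"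
    by (rule greedy[OF fG deg symR])
  then obtain W where W3: "W \<subseteq> Good \<and> (\<forall>w\<in>W. \<forall>w'\<in>W. w \<noteq> w' \<longrightarrow> \<not> R w w') \<and> card Good \<le> (d+1) * card W" ..
  have WG: "W \<subseteq> Good" using W3 by (rule conjunct1)
  have ind: "\<forall>w\<in>W. \<forall>w'\<in>W. w \<noteq> w' \<longrightarrow> \<not> R w w'" using W3 by (elim conjE) assumption
  have cW: "card Good \<le> (d+1) * card W" using W3 by (elim conjE) assumption
  have WD: "W \<subseteq> D" using WG GD by blast
  have injW: "\<And>w. w \<in> W \<Longrightarrow> inj_on (\<lambda>k. \<sigma> k w) K" using WG unfolding Good_def by blast
  have disj: "\<And>w w'. w \<in> W \<Longrightarrow> w' \<in> W \<Longrightarrow> w \<noteq> w' \<Longrightarrow> (\<lambda>k. \<sigma> k w) ` K \<inter> (\<lambda>k. \<sigma> k w') ` K = {}"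
  proof -
    fix w w' assume "w \<in> W" "w' \<in> W" "w \<noteq> w'"
    then have "\<not> R w w'" using ind by blast
    then show "(\<lambda>k. \<sigma> k w) ` K \<inter> (\<lambda>k. \<sigma> k w') ` K = {}" unfolding R_def by blast
  qed
  have wc: "real (card {\<omega> \<in> D \<rightarrow>\<^sub>E A. card {w\<in>W. (\<lambda>k\<in>K. \<omega> (\<sigma> k w)) = p} \<le> M})
     \<le> real (card A) ^ card D * (1/(1/2))^M * (1 - (1-1/2) / real (card A) ^ card K) ^ card W"
    by (rule window_count[OF fD fA Ane fK WD _ injW disj pA]) (use sDv WD in auto)
  have wc2: "real (card A) ^ card D * (1/(1/2))^M * (1 - (1-1/2) / real (card A) ^ card K) ^ card W
     = real (card A) ^ card D * 2 ^ M * (1 - 1 / (2 * real (card A) ^ card K)) ^ card W"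
    by simp
  have sepb: "sep_number (rhoinf rho0 D) \<epsilon> (sofic_maps X D \<sigma> K \<delta>) \<le>
      ereal (real (card {\<omega> \<in> D \<rightarrow>\<^sub>E A. card {w\<in>W. (\<lambda>k\<in>K. \<omega> (\<sigma> k w)) = p} \<le> M}))"
  proof (rule sep_ub)
    fix S assume fS: "finite S" and SZ: "S \<subseteq> sofic_maps X D \<sigma> K \<delta>"
      and sep: "\<forall>x\<in>S. \<forall>y\<in>S. x \<noteq> y \<longrightarrow> rhoinf rho0 D x y \<ge> \<epsilon>"
    define f where "f = (\<lambda>\<phi>::'v \<Rightarrow> 'm \<Rightarrow> 'a. restrict (\<lambda>v. \<phi> v 1) D)"
    have inj: "inj_on f S" unfolding f_def by (rule sep_inj[OF fD Dne e sep])
    have sub: "f ` S \<subseteq> {\<omega> \<in> D \<rightarrow>\<^sub>E A. card {w\<in>W. (\<lambda>k\<in>K. \<omega> (\<sigma> k w)) = p} \<le> M}"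
    proof
      fix z assume "z \<in> f ` S"
      then obtain \<phi> where p1: "\<phi> \<in> S" and zf: "z = f \<phi>" by blast
      have phS: "\<phi> \<in> sofic_maps X D \<sigma> K \<delta>" using p1 SZ by blast
      have phX: "\<phi> \<in> D \<rightarrow>\<^sub>E X" using phS unfolding sofic_maps_def by blast
      then have "\<forall>v\<in>D. \<phi> v \<in> full_shift A" using XA by blast
      then have "\<forall>v\<in>D. \<phi> v 1 \<in> A" unfolding full_shift_def by blast
      then have zA: "z \<in> D \<rightarrow>\<^sub>E A" using zf unfolding f_def by simp
      have sub2: "{w\<in>W. (\<lambda>k\<in>K. z (\<sigma> k w)) = p} \<subseteq> (\<Union>k\<in>K. {v\<in>D. \<phi> (\<sigma> k v) 1 \<noteq> \<phi> v k})"
      proof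
        fix w assume wp: "w \<in> {w\<in>W. (\<lambda>k\<in>K. z (\<sigma> k w)) = p}"
        then have wW: "w \<in> W" and pat: "(\<lambda>k\<in>K. z (\<sigma> k w)) = p" by simp_all
        have wD: "w \<in> D" using wW WD by blast
        have "\<phi> w \<in> X" using phX wD by blast
        then obtain k where k: "k \<in> K" "\<phi> w k \<noteq> p k" using avoid by blast
        have "p k = z (\<sigma> k w)" using pat k(1) by auto
        also have "\<dots> = \<phi> (\<sigma> k w) 1" using zf sDv[OF wD] unfolding f_def by simp
        finally have "\<phi> (\<sigma> k w) 1 \<noteq> \<phi> w k" using k(2) by simp
        then show "w \<in> (\<Union>k\<in>K. {v\<in>D. \<phi> (\<sigma> k v) 1 \<noteq> \<phi> v k})" using k(1) wD by blast
      qed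
      have "real (card {w\<in>W. (\<lambda>k\<in>K. z (\<sigma> k w)) = p}) \<le> real (card (\<Union>k\<in>K. {v\<in>D. \<phi> (\<sigma> k v) 1 \<noteq> \<phi> v k}))"
        by (subst of_nat_le_iff, rule card_mono[OF _ sub2]) (use fK fD in simp)
      also have "\<dots> \<le> real (\<Sum>k\<in>K. card {v\<in>D. \<phi> (\<sigma> k v) 1 \<noteq> \<phi> v k})"
        by (subst of_nat_le_iff, rule card_UN_le[OF fK])
      also have "\<dots> = (\<Sum>k\<in>K. real (card {v\<in>D. \<phi> (\<sigma> k v) 1 \<noteq> \<phi> v k}))" by simp
      also have "\<dots> \<le> (\<Sum>k\<in>K. \<delta>\<^sup>2 * real (card D))"
        by (rule sum_mono, rule bad_count[OF fD Dne phS])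
      also have "\<dots> = real (card K) * \<delta>\<^sup>2 * real (card D)" by simp
      finally have "card {w\<in>W. (\<lambda>k\<in>K. z (\<sigma> k w)) = p} \<le> M" unfolding M_def by (rule le_nat_floor)
      then show "z \<in> {\<omega> \<in> D \<rightarrow>\<^sub>E A. card {w\<in>W. (\<lambda>k\<in>K. \<omega> (\<sigma> k w)) = p} \<le> M}" using zA by simp
    qed
    have "card S = card (f ` S)" using inj by (simp add: card_image)
    also have "\<dots> \<le> card {\<omega> \<in> D \<rightarrow>\<^sub>E A. card {w\<in>W. (\<lambda>k\<in>K. \<omega> (\<sigma> k w)) = p} \<le> M}"
      by (rule card_mono[OF _ sub]) (use fD fA in \<open>simp add: finite_PiE\<close>)
    finally show "real (card S) \<le> real (card {\<omega> \<in> D \<rightarrow>\<^sub>E A. card {w\<in>W. (\<lambda>k\<in>K. \<omega> (\<sigma> k w)) = p} \<le> M})"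
      by (simp only: of_nat_le_iff)
  qed
  have c2: "2 * card Good \<le> 2 * ((d+1) * card W)" using cW by (rule mult_left_mono) simp
  have "card D \<le> 2 * (d + 1) * card W" using cGood c2 by (simp only: mult.assoc)
  moreover have "sep_number (rhoinf rho0 D) \<epsilon> (sofic_maps X D \<sigma> K \<delta>) \<le>
      ereal (real (card A) ^ card D * 2 ^ M * (1 - 1 / (2 * real (card A) ^ card K)) ^ card W)"
  proof -
    have "ereal (real (card {\<omega> \<in> D \<rightarrow>\<^sub>E A. card {w\<in>W. (\<lambda>k\<in>K. \<omega> (\<sigma> k w)) = p} \<le> M}))
       \<le> ereal (real (card A) ^ card D * 2 ^ M * (1 - 1 / (2 * real (card A) ^ card K)) ^ card W)"
      using wc unfolding wc2 by (simp only: ereal_less_eq(3))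
    then show ?thesis by (rule order_trans[OF sepb])
  qed
  ultimately have "card D \<le> 2 * (d + 1) * card W \<and> sep_number (rhoinf rho0 D) \<epsilon> (sofic_maps X D \<sigma> K \<delta>) \<le>
      ereal (real (card A) ^ card D * 2 ^ M * (1 - 1 / (2 * real (card A) ^ card K)) ^ card W)" by (rule conjI)
  then show ?thesis unfolding d_def M_def by (rule exI)
qed


lemma ssaD:
  assumes "strong_sofic_approx le D \<sigma>"
  shows "directed_set le" "\<And>i. finite (D i)" "\<And>i. D i \<noteq> {}" "\<And>i m. \<sigma> i m ` D i \<subseteq> D i"
    "\<And>i v. v \<in> D i \<Longrightarrow> \<sigma> i 1 v = v"
    "\<And>m1 m2. m1 \<noteq> m2 \<Longrightarrow> ((\<lambda>i. hamming (D i) (\<sigma> i m1) (\<sigma> i m2)) \<longlongrightarrow> 1) (net_filter le)"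
    "\<And>K. finite K \<Longrightarrow> \<exists>\<Delta>::nat. \<Delta> \<ge> 1 \<and> (\<forall>i. \<forall>k\<in>K. \<forall>v\<in>D i. card {w\<in>D i. \<sigma> i k w = v} \<le> \<Delta>)"
  using assms unfolding strong_sofic_approx_def by simp_all

lemma eventually_good:
  fixes \<sigma> :: "'i \<Rightarrow> 'm::monoid_mult \<Rightarrow> 'v \<Rightarrow> 'v"
  assumes ssa: "strong_sofic_approx le D \<sigma>" and fK: "finite K"
  shows "eventually (\<lambda>i. 2 * card {v\<in>D i. \<not> inj_on (\<lambda>k. \<sigma> i k v) K} \<le> card (D i)) (net_filter le)"
proof -
  define P where "P = {pr \<in> K \<times> K. fst pr \<noteq> snd pr}"
  define \<gamma> :: real where "\<gamma> = 1 / (2 * real (card K) * real (card K) + 1)"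
  have fP: "finite P" unfolding P_def using fK by simp
  have cP: "card P \<le> card K * card K"
  proof -
    have "card P \<le> card (K \<times> K)" unfolding P_def by (rule card_mono) (use fK in auto)
    then show ?thesis by (simp add: card_cartesian_product)
  qed
  have "0 \<le> 2 * real (card K) * real (card K)" by simp
  then have "0 < 2 * real (card K) * real (card K) + 1" by linarith
  then have gpos: "\<gamma> > 0" unfolding \<gamma>_def by simp
  have ham: "\<And>m1 m2. m1 \<noteq> m2 \<Longrightarrow> ((\<lambda>i. hamming (D i) (\<sigma> i m1) (\<sigma> i m2)) \<longlongrightarrow> 1) (net_filter le)"
    by (rule ssaD(6)[OF ssa])
  have fin: "\<And>i. finite (D i) \<and> D i \<noteq> {}" using ssaD(2,3)[OF ssa] by simp
  have "\<forall>pr\<in>P. eventually (\<lambda>i. 1 - \<gamma> < hamming (D i) (\<sigma> i (fst pr)) (\<sigma> i (snd pr))) (net_filter le)"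
  proof
    fix pr assume "pr \<in> P"
    then have "fst pr \<noteq> snd pr" unfolding P_def by simp
    from ham[OF this] show "eventually (\<lambda>i. 1 - \<gamma> < hamming (D i) (\<sigma> i (fst pr)) (\<sigma> i (snd pr))) (net_filter le)"
      by (rule order_tendstoD(1)) (use gpos in simp)
  qed
  then have ev: "eventually (\<lambda>i. \<forall>pr\<in>P. 1 - \<gamma> < hamming (D i) (\<sigma> i (fst pr)) (\<sigma> i (snd pr))) (net_filter le)"
    by (rule eventually_ball_finite[OF fP])
  show ?thesis
  proof (rule eventually_mono[OF ev])
    fix i assume H: "\<forall>pr\<in>P. 1 - \<gamma> < hamming (D i) (\<sigma> i (fst pr)) (\<sigma> i (snd pr))"
    have fD: "finite (D i)" and Dne: "D i \<noteq> {}" using fin by simp_all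
    define n where "n = card (D i)"
    have npos: "real n > 0" unfolding n_def using fD Dne by (simp add: card_gt_0_iff)
    have each: "real (card {v\<in>D i. \<sigma> i (fst pr) v = \<sigma> i (snd pr) v}) \<le> \<gamma> * real n" if pr: "pr \<in> P" for pr
    proof -
      define E where "E = {v\<in>D i. \<sigma> i (fst pr) v = \<sigma> i (snd pr) v}"
      define N where "N = {v\<in>D i. \<sigma> i (fst pr) v \<noteq> \<sigma> i (snd pr) v}"
      have "D i = E \<union> N" "E \<inter> N = {}" unfolding E_def N_def by auto
      then have "card (D i) = card E + card N" using fD by (metis card_Un_disjoint finite_Un)
      then have cEN: "real n = real (card E) + real (card N)" unfolding n_def by simp
      have "1 - \<gamma> < real (card N) / real n" using H pr unfolding hamming_def N_def n_def by simp
      then have "(1 - \<gamma>) * real n < real (card N)" using npos by (simp add: pos_less_divide_eq)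
      then show ?thesis using cEN unfolding E_def by (simp add: algebra_simps)
    qed
    have sub: "{v\<in>D i. \<not> inj_on (\<lambda>k. \<sigma> i k v) K} \<subseteq> (\<Union>pr\<in>P. {v\<in>D i. \<sigma> i (fst pr) v = \<sigma> i (snd pr) v})"
    proof
      fix v assume "v \<in> {v\<in>D i. \<not> inj_on (\<lambda>k. \<sigma> i k v) K}"
      then have vD: "v \<in> D i" and ni: "\<not> inj_on (\<lambda>k. \<sigma> i k v) K" by simp_all
      from ni obtain k k' where kk: "k \<in> K" "k' \<in> K" "\<sigma> i k v = \<sigma> i k' v" "k \<noteq> k'"
        unfolding inj_on_def by blast
      have "(k, k') \<in> P" unfolding P_def using kk by simp
      moreover have "v \<in> {v\<in>D i. \<sigma> i (fst (k, k')) v = \<sigma> i (snd (k, k')) v}" using vD kk by simp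
      ultimately show "v \<in> (\<Union>pr\<in>P. {v\<in>D i. \<sigma> i (fst pr) v = \<sigma> i (snd pr) v})" by (rule UN_I)
    qed
    have "real (card {v\<in>D i. \<not> inj_on (\<lambda>k. \<sigma> i k v) K}) \<le> real (card (\<Union>pr\<in>P. {v\<in>D i. \<sigma> i (fst pr) v = \<sigma> i (snd pr) v}))"
      by (subst of_nat_le_iff, rule card_mono[OF _ sub]) (use fP fD in simp)
    also have "\<dots> \<le> real (\<Sum>pr\<in>P. card {v\<in>D i. \<sigma> i (fst pr) v = \<sigma> i (snd pr) v})"
      by (subst of_nat_le_iff, rule card_UN_le[OF fP])
    also have "\<dots> = (\<Sum>pr\<in>P. real (card {v\<in>D i. \<sigma> i (fst pr) v = \<sigma> i (snd pr) v}))" by simp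
    also have "\<dots> \<le> (\<Sum>pr\<in>P. \<gamma> * real n)" by (rule sum_mono) (rule each)
    also have "\<dots> = real (card P) * \<gamma> * real n" by simp
    also have "\<dots> \<le> real (card K * card K) * \<gamma> * real n"
    proof -
      have h: "real (card P) \<le> real (card K * card K)" using cP by (simp only: of_nat_le_iff)
      have "real (card P) * \<gamma> \<le> real (card K * card K) * \<gamma>" by (rule mult_right_mono[OF h]) (use gpos in simp)
      then show ?thesis by (rule mult_right_mono) simp
    qed
    also have "real (card K * card K) * \<gamma> \<le> 1/2"
    proof -
      define c where "c = real (card K) * real (card K)"
      have c0: "c \<ge> 0" unfolding c_def by simp
      have "real (card K * card K) * \<gamma> = c / (2 * c + 1)" unfolding c_def \<gamma>_def by (simp add: mult.assoc)
      also have "\<dots> \<le> 1/2" using c0 by (simp add: divide_le_eq)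
      finally show ?thesis .
    qed
    then have "real (card K * card K) * \<gamma> * real n \<le> 1/2 * real n" by (rule mult_right_mono) simp
    finally have "real (card {v\<in>D i. \<not> inj_on (\<lambda>k. \<sigma> i k v) K}) \<le> real n / 2" by simp
    then show "2 * card {v\<in>D i. \<not> inj_on (\<lambda>k. \<sigma> i k v) K} \<le> card (D i)" unfolding n_def by linarith
  qed
qed

lemma final_num:
  fixes a \<delta> q :: real and n w M d kK :: nat
  assumes n: "n > 0" and a: "a \<ge> 1" and q: "0 < q" "q < 1" and wn: "n \<le> 2 * (d+1) * w"
    and M: "real M \<le> real kK * \<delta>\<^sup>2 * real n"
  shows "ln (a ^ n * 2 ^ M * q ^ w) / real n \<le> ln a + real kK * \<delta>\<^sup>2 * ln 2 + ln q / (2 * (real d + 1))"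
proof -
  have lq: "ln q < 0" using q by simp
  have ap: "a ^ n > 0" using a by simp
  have qp: "q ^ w > 0" using q by simp
  have tp: "(2::real) ^ M > 0" by simp
  have "ln (a ^ n * 2 ^ M * q ^ w) = ln (a ^ n) + ln (2 ^ M) + ln (q ^ w)"
    using ap qp tp by (simp add: ln_mult_pos)
  also have "\<dots> = real n * ln a + real M * ln 2 + real w * ln q" by (simp only: ln_realpow)
  finally have L: "ln (a ^ n * 2 ^ M * q ^ w) = real n * ln a + real M * ln 2 + real w * ln q" .
  have t2: "real M * ln 2 \<le> real kK * \<delta>\<^sup>2 * real n * ln 2" by (rule mult_right_mono[OF M]) simp
  have "real n \<le> real (2 * (d+1) * w)" using wn by (simp only: of_nat_le_iff)
  then have wn': "real n \<le> 2 * (real d + 1) * real w" by (simp add: algebra_simps)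
  have t3: "real w * ln q \<le> (real n / (2 * (real d + 1))) * ln q"
  proof (rule mult_right_mono_neg)
    have pos: "0 < 2 * (real d + 1)" by simp
    have "real n \<le> real w * (2 * (real d + 1))" using wn' by (metis mult.commute)
    then show "real n / (2 * (real d + 1)) \<le> real w" by (subst pos_divide_le_eq[OF pos])
  qed (use lq in simp)
  have "ln (a ^ n * 2 ^ M * q ^ w) \<le> real n * ln a + real kK * \<delta>\<^sup>2 * real n * ln 2 + (real n / (2 * (real d + 1))) * ln q"
    using L t2 t3 by linarith
  also have "\<dots> = real n * (ln a + real kK * \<delta>\<^sup>2 * ln 2 + ln q / (2 * (real d + 1)))"
    by (simp add: distrib_left)
  finally have "ln (a ^ n * 2 ^ M * q ^ w) \<le> real n * (ln a + real kK * \<delta>\<^sup>2 * ln 2 + ln q / (2 * (real d + 1)))" .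
  then show ?thesis using n by (simp add: divide_le_eq mult.commute)
qed

theorem theorem5p3:
  fixes le :: "'i \<Rightarrow> 'i \<Rightarrow> bool"
    and D :: "'i \<Rightarrow> 'v set"
    and \<sigma> :: "'i \<Rightarrow> 'm::monoid_mult \<Rightarrow> 'v \<Rightarrow> 'v"
    and A :: "'a set"
    and X :: "('m \<Rightarrow> 'a) set"
  assumes "infinite (UNIV :: 'm set)"
    and "strong_sofic_approx le D \<sigma>"
    and "finite A"
    and "subshift A X"
  shows "sofic_entropy le D \<sigma> X \<le> elog (ereal (real (card A)))
    \<and> (sofic_entropy le D \<sigma> X = elog (ereal (real (card A))) \<longleftrightarrow> X = full_shift A)"
proof -
  have ssa: "strong_sofic_approx le D \<sigma>" by (rule assms(2))
  have fA: "finite A" by (rule assms(3))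
  have dir: "directed_set le" by (rule ssaD(1)[OF ssa])
  have NB: "net_filter le \<noteq> bot" by (rule net_filter_not_bot[OF dir])
  have fD: "\<And>i. finite (D i)" by (rule ssaD(2)[OF ssa])
  have Dne: "\<And>i. D i \<noteq> {}" by (rule ssaD(3)[OF ssa])
  have sD: "\<And>i m. \<sigma> i m ` D i \<subseteq> D i" by (rule ssaD(4)[OF ssa])
  have s1: "\<And>i v. v \<in> D i \<Longrightarrow> \<sigma> i 1 v = v" by (rule ssaD(5)[OF ssa])
  have npos: "\<And>i. card (D i) > 0" using fD Dne by (simp add: card_gt_0_iff)
  have XA: "X \<subseteq> full_shift A" and cl: "closedin (prodiscrete A) X"
    using assms(4) unfolding subshift_def by simp_all
  show ?thesis
  proof (cases "A = {}")
    case True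
    have fsE: "full_shift A = ({} :: ('m \<Rightarrow> 'a) set)" unfolding full_shift_def using True by (simp add: PiE_eq_empty_iff)
    have XE: "X = {}" using XA fsE by simp
    have ent: "sofic_entropy le D \<sigma> X \<le> -\<infinity>"
    proof (rule entropy_ub)
      fix \<epsilon> :: real assume e: "\<epsilon> > 0"
      have "eventually (\<lambda>i. ereal (1 / real (card (D i))) *
           elog (sep_number (rhoinf rho0 (D i)) \<epsilon> (sofic_maps X (D i) (\<sigma> i) {} 1)) \<le> -\<infinity>) (net_filter le)"
      proof (rule always_eventually, rule allI)
        fix i
        have "sep_number (rhoinf rho0 (D i)) \<epsilon> (sofic_maps X (D i) (\<sigma> i) {} 1) \<le> ereal (real (card A) ^ card (D i))"
          by (rule sep_upper_all[OF fD Dne fA XA e])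
        also have "real (card A) ^ card (D i) = 0" using True npos[of i] by simp
        finally have "sep_number (rhoinf rho0 (D i)) \<epsilon> (sofic_maps X (D i) (\<sigma> i) {} 1) \<le> 0"
          by (simp add: zero_ereal_def)
        then have "elog (sep_number (rhoinf rho0 (D i)) \<epsilon> (sofic_maps X (D i) (\<sigma> i) {} 1)) = -\<infinity>"
          unfolding elog_def by simp
        then show "ereal (1 / real (card (D i))) *
           elog (sep_number (rhoinf rho0 (D i)) \<epsilon> (sofic_maps X (D i) (\<sigma> i) {} 1)) \<le> -\<infinity>"
          using npos[of i] by simp
      qed
      then show "\<exists>F \<delta>. finite F \<and> \<delta> > 0 \<and> eventually (\<lambda>i. ereal (1 / real (card (D i))) *
           elog (sep_number (rhoinf rho0 (D i)) \<epsilon> (sofic_maps X (D i) (\<sigma> i) F \<delta>)) \<le> -\<infinity>) (net_filter le)"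
        by (intro exI[of _ "{}"] exI[of _ 1]) simp
    qed
    then have ent2: "sofic_entropy le D \<sigma> X = -\<infinity>" by simp
    have "elog (ereal (real (card A))) = -\<infinity>" using True unfolding elog_def by simp
    then show ?thesis using ent2 XE fsE by simp
  next
    case Ane: False
    define a where "a = real (card A)"
    have a1: "a \<ge> 1" unfolding a_def using Ane fA by (simp add: Suc_leI card_gt_0_iff)
    have elog_a: "elog (ereal (real (card A))) = ereal (ln a)" using a1 unfolding elog_def a_def by simp
    have lnpow: "\<And>n. n > 0 \<Longrightarrow> ln (a ^ n) / real n = ln a" by (simp add: ln_realpow)
    have UB: "sofic_entropy le D \<sigma> X \<le> ereal (ln a)"
    proof (rule entropy_ub)
      fix \<epsilon> :: real assume e: "\<epsilon> > 0"
      have "eventually (\<lambda>i. ereal (1 / real (card (D i))) *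
           elog (sep_number (rhoinf rho0 (D i)) \<epsilon> (sofic_maps X (D i) (\<sigma> i) {} 1)) \<le> ereal (ln a)) (net_filter le)"
      proof (rule always_eventually, rule allI)
        fix i
        have "ereal (1 / real (card (D i))) *
           elog (sep_number (rhoinf rho0 (D i)) \<epsilon> (sofic_maps X (D i) (\<sigma> i) {} 1)) \<le> ereal (ln (a ^ card (D i)) / real (card (D i)))"
          by (rule val_ub[OF npos]) (use a1 sep_upper_all[OF fD Dne fA XA e] in \<open>simp_all add: a_def\<close>)
        then show "ereal (1 / real (card (D i))) *
           elog (sep_number (rhoinf rho0 (D i)) \<epsilon> (sofic_maps X (D i) (\<sigma> i) {} 1)) \<le> ereal (ln a)"
          using lnpow[OF npos[of i]] by simp
      qed
      then show "\<exists>F \<delta>. finite F \<and> \<delta> > 0 \<and> eventually (\<lambda>i. ereal (1 / real (card (D i))) *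
           elog (sep_number (rhoinf rho0 (D i)) \<epsilon> (sofic_maps X (D i) (\<sigma> i) F \<delta>)) \<le> ereal (ln a)) (net_filter le)"
        by (intro exI[of _ "{}"] exI[of _ 1]) simp
    qed
    show ?thesis
    proof (cases "X = full_shift A")
      case True
      have LB: "ereal (ln a) \<le> sofic_entropy le D \<sigma> X"
      proof (rule entropy_lb[OF NB, of 1])
        fix F :: "'m set" and \<delta> :: real assume "finite F" "\<delta> > 0"
        then have d0: "\<delta> \<ge> 0" by simp
        show "eventually (\<lambda>i. ereal (ln a) \<le> ereal (1 / real (card (D i))) *
           elog (sep_number (rhoinf rho0 (D i)) 1 (sofic_maps X (D i) (\<sigma> i) F \<delta>))) (net_filter le)"
        proof (rule always_eventually, rule allI)
          fix i
          have "ereal (ln (a ^ card (D i)) / real (card (D i))) \<le> ereal (1 / real (card (D i))) *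
             elog (sep_number (rhoinf rho0 (D i)) 1 (sofic_maps X (D i) (\<sigma> i) F \<delta>))"
            by (rule val_lb[OF npos]) (use a1 sep_lower_full[where D="D i" and \<sigma>="\<sigma> i" and A=A and \<epsilon>=1 and \<delta>=\<delta> and F=F, OF fD[of i] Dne[of i] fA sD s1 _ d0] True in \<open>simp_all add: a_def\<close>)
          then show "ereal (ln a) \<le> ereal (1 / real (card (D i))) *
             elog (sep_number (rhoinf rho0 (D i)) 1 (sofic_maps X (D i) (\<sigma> i) F \<delta>))"
            using lnpow[OF npos[of i]] by simp
        qed
      qed simp
      show ?thesis using UB LB True elog_a by simp
    next
      case False
      obtain x0 where x0F: "x0 \<in> full_shift A" and x0X: "x0 \<notin> X" using XA False by blast
      have top: "topspace (prodiscrete A) = (full_shift A :: ('m \<Rightarrow> 'a) set)"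
        unfolding prodiscrete_def full_shift_def by simp
      have op: "openin (prodiscrete A) (full_shift A - X)"
        using cl unfolding closedin_def top by simp
      then obtain U where Ufin: "finite {i \<in> UNIV. U i \<noteq> topspace (discrete_topology A)}"
        and x0U: "x0 \<in> Pi\<^sub>E UNIV U" and Usub: "Pi\<^sub>E UNIV U \<subseteq> full_shift A - X"
        unfolding prodiscrete_def openin_product_topology_alt using x0F x0X by blast
      define K where "K = {i. U i \<noteq> A}"
      have fK: "finite K" using Ufin unfolding K_def by simp
      define p where "p = restrict x0 K"
      have x0A: "\<And>i. x0 i \<in> A" using x0F unfolding full_shift_def by blast
      have pA: "p \<in> K \<rightarrow>\<^sub>E A" unfolding p_def using x0A by simp
      have avoid: "\<forall>x\<in>X. \<exists>k\<in>K. x k \<noteq> p k"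
      proof (rule ballI, rule ccontr)
        fix x assume xX: "x \<in> X" and nk: "\<not> (\<exists>k\<in>K. x k \<noteq> p k)"
        have xA: "\<And>i. x i \<in> A" using xX XA unfolding full_shift_def by blast
        have "\<And>i. x i \<in> U i"
        proof -
          fix i show "x i \<in> U i"
          proof (cases "i \<in> K")
            case True
            then have "x i = x0 i" using nk unfolding p_def by simp
            moreover have "x0 i \<in> U i" using x0U by blast
            ultimately show ?thesis by simp
          next
            case False
            then have "U i = A" unfolding K_def by simp
            then show ?thesis using xA by simp
          qed
        qed
        then have "x \<in> Pi\<^sub>E UNIV U" by (simp add: PiE_iff)
        then show False using Usub xX by blast
      qed
      obtain \<Delta> :: nat where Dl: "\<forall>i. \<forall>k\<in>K. \<forall>v\<in>D i. card {w\<in>D i. \<sigma> i k w = v} \<le> \<Delta>"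
        using ssaD(7)[OF ssa fK] by blast
      define b where "b = a ^ card K"
      define q where "q = 1 - 1 / (2 * b)"
      define d where "d = card K * card K * \<Delta>"
      have b1: "b \<ge> 1" unfolding b_def using a1 by simp
      have q0: "0 < q" and q1: "q < 1" unfolding q_def using b1 by (simp_all add: field_simps)
      define c0 where "c0 = - ln q / (2 * (real d + 1))"
      have lq: "- ln q > 0" using q0 q1 by simp
      have dd: "2 * (real d + 1) > 0" by simp
      have c0pos: "c0 > 0" unfolding c0_def using divide_pos_pos[OF lq dd] by simp
      define \<delta> where "\<delta> = min 1 (c0 / (2 * (real (card K) + 1)))"
      have dpos: "\<delta> > 0" unfolding \<delta>_def using c0pos by simp
      have dle1: "\<delta> \<le> 1" unfolding \<delta>_def by simp
      have dsmall: "real (card K) * \<delta>\<^sup>2 * ln 2 \<le> c0 / 2"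
      proof -
        have l2: "ln (2::real) \<le> 1" using ln_le_minus_one[of 2] by simp
        have l2p: "ln (2::real) \<ge> 0" by simp
        have "\<delta>\<^sup>2 \<le> \<delta>" using dpos dle1 by (simp add: power2_eq_square mult_le_cancel_left1)
        then have "real (card K) * \<delta>\<^sup>2 * ln 2 \<le> real (card K) * \<delta> * 1"
          using l2 l2p dpos by (intro mult_mono) (simp_all add: mult_left_mono)
        also have "\<delta> \<le> c0 / (2 * (real (card K) + 1))" unfolding \<delta>_def by simp
        then have "real (card K) * \<delta> \<le> real (card K) * (c0 / (2 * (real (card K) + 1)))"
          by (rule mult_left_mono) simp
        also have "real (card K) * (c0 / (2 * (real (card K) + 1))) \<le> c0 / 2"
          using c0pos by (simp add: field_simps)
        finally show ?thesis by simp
      qed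
      have SB: "sofic_entropy le D \<sigma> X \<le> ereal (ln a - c0 / 2)"
      proof (rule entropy_ub)
        fix \<epsilon> :: real assume e: "\<epsilon> > 0"
        have "eventually (\<lambda>i. ereal (1 / real (card (D i))) *
           elog (sep_number (rhoinf rho0 (D i)) \<epsilon> (sofic_maps X (D i) (\<sigma> i) K \<delta>)) \<le> ereal (ln a - c0 / 2)) (net_filter le)"
        proof (rule eventually_mono[OF eventually_good[OF ssa fK]])
          fix i assume good: "2 * card {v\<in>D i. \<not> inj_on (\<lambda>k. \<sigma> i k v) K} \<le> card (D i)"
          define n where "n = card (D i)"
          define M where "M = nat \<lfloor>real (card K) * \<delta>\<^sup>2 * real n\<rfloor>"
          have Dli: "\<forall>k\<in>K. \<forall>v\<in>D i. card {w\<in>D i. \<sigma> i k w = v} \<le> \<Delta>" using Dl by blast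
          obtain w where wn: "card (D i) \<le> 2 * (card K * card K * \<Delta> + 1) * w"
            and sb: "sep_number (rhoinf rho0 (D i)) \<epsilon> (sofic_maps X (D i) (\<sigma> i) K \<delta>) \<le>
              ereal (real (card A) ^ card (D i) * 2 ^ (nat \<lfloor>real (card K) * \<delta>\<^sup>2 * real (card (D i))\<rfloor>)
                 * (1 - 1 / (2 * real (card A) ^ card K)) ^ w)"
            using key_bound[OF fD Dne fA Ane fK sD XA avoid pA Dli good e, of \<delta>] by blast
          have sb2: "sep_number (rhoinf rho0 (D i)) \<epsilon> (sofic_maps X (D i) (\<sigma> i) K \<delta>) \<le> ereal (a ^ n * 2 ^ M * q ^ w)"
            using sb unfolding a_def n_def M_def q_def b_def by simp
          have Rpos: "a ^ n * 2 ^ M * q ^ w > 0" using a1 q0 by simp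
          have v1: "ereal (1 / real n) * elog (sep_number (rhoinf rho0 (D i)) \<epsilon> (sofic_maps X (D i) (\<sigma> i) K \<delta>))
              \<le> ereal (ln (a ^ n * 2 ^ M * q ^ w) / real n)"
            by (rule val_ub[OF _ Rpos sb2]) (use npos[of i] in \<open>simp add: n_def\<close>)
          have Mle: "real M \<le> real (card K) * \<delta>\<^sup>2 * real n" unfolding M_def by (rule of_nat_floor) simp
          have wn2: "n \<le> 2 * (d + 1) * w" using wn unfolding n_def d_def by simp
          have "ln (a ^ n * 2 ^ M * q ^ w) / real n \<le> ln a + real (card K) * \<delta>\<^sup>2 * ln 2 + ln q / (2 * (real d + 1))"
            by (rule final_num[OF _ a1 q0 q1 wn2 Mle]) (use npos[of i] in \<open>simp add: n_def\<close>)
          also have "\<dots> \<le> ln a - c0 / 2"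
          proof -
            have h: "ln q / (2 * (real d + 1)) = - c0" unfolding c0_def by simp
            show ?thesis using dsmall h by linarith
          qed
          finally have "ereal (ln (a ^ n * 2 ^ M * q ^ w) / real n) \<le> ereal (ln a - c0 / 2)" by simp
          with v1 show "ereal (1 / real (card (D i))) *
           elog (sep_number (rhoinf rho0 (D i)) \<epsilon> (sofic_maps X (D i) (\<sigma> i) K \<delta>)) \<le> ereal (ln a - c0 / 2)"
            unfolding n_def by (rule order_trans)
        qed
        then show "\<exists>F \<delta>'. finite F \<and> \<delta>' > 0 \<and> eventually (\<lambda>i. ereal (1 / real (card (D i))) *
           elog (sep_number (rhoinf rho0 (D i)) \<epsilon> (sofic_maps X (D i) (\<sigma> i) F \<delta>')) \<le> ereal (ln a - c0 / 2)) (net_filter le)"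
          using fK dpos by blast
      qed
      have ne: "sofic_entropy le D \<sigma> X \<noteq> ereal (ln a)"
      proof
        assume "sofic_entropy le D \<sigma> X = ereal (ln a)"
        then have "ereal (ln a) \<le> ereal (ln a - c0 / 2)" using SB by simp
        then show False using c0pos by simp
      qed
      show ?thesis using UB ne False elog_a by simp
    qed
  qed
qed

end
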